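(* Let $\sigma=\langle\mathcal V,\mathcal C,S,B\rangle$ be an approval-based multi-winner election, let $\mathcal A\subseteq\mathcal C$ be non-empty, and let $F\in\mathfrak F^{\mathrm{opt}}_{\sigma,\mathcal A}$. If $c^*\in\mathcal A$ satisfies $\mathrm{Supp}_F(c^* )>\mathrm{maxMin}(\sigma,\mathcal A)$, then $$\mathrm{maxMin}(\sigma,\mathcal A)=\mathrm{maxMin}(\sigma,\mathcal A\setminus\{c^*\}).$$
   Context: An approval-based multi-winner election is a tuple $\sigma=\langle \mathcal V,\mathcal C,S,B\rangle$, where $\mathcal V$ is a finite set of agents, $\mathcal C$ is a finite set of candidates, $1\le S\le|\mathcal C|$ is an integer, and $B:2^{\mathcal C}\to\mathbb N$ gives, for each $\mathcal A\subseteq\mathcal C$, the number $B(\mathcal A)$ of agents whose ballot is exactly $\mathcal A$ (with $\sum_{\mathcal A}B(\mathcal A)\le|\mathcal V|$). For a non-empty $\mathcal A\subseteq\mathcal C$, the family $\mathfrak F_{\sigma,\mathcal A}$ is the set of all $F:2^{\mathcal C}\times\mathcal A\to\mathbb R$ such that: - $F(y,c)\ge0$ for all $y$ and $c$; - $F(y,c)=0$ if $c\notin y$; - $\sum_{c\in\mathcal A\cap y}F(y,c)=B(y)$ whenever $y\cap\mathcal A\neq\emptyset$. We write $\mathrm{Supp}_F(c)=\sum_yF(y,c)$ and $\mathrm{maxMin}(\sigma,\mathcal A)=\sup_{F\in\mathfrak F_{\sigma,\mathcal A}}\min_{c\in\mathcal A}\mathrm{Supp}_F(c)$. We also write $\mathfrak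 F^{\mathrm{opt}}_{\sigma,\mathcal A}=\{F\in\mathfrak F_{\sigma,\mathcal A}:\mathrm{Supp}_F(c)\ge\mathrm{maxMin}(\sigma,\mathcal A)\ \forall c\in\mathcal A\}$. *)

theory Defs
  imports Complex_Main
begin

text \<open>An approval-based multi-winner election: agents V, candidates C, committee size S,
  ballot counts B (B y = number of agents whose ballot is exactly y, for y a subset of C).\<close>
definition election :: "'v set \<Rightarrow> 'c set \<Rightarrow> nat \<Rightarrow> ('c set \<Rightarrow> nat) \<Rightarrow> bool" where
  "election V C S B \<longleftrightarrow> finite V \<and> finite C \<and> 1 \<le> S \<and> S \<le> card C
     \<and> (\<forall>y. \<not> y \<subseteq> C \<longrightarrow> B y = 0)
     \<and> (\<Sum>y\<in>Pow C. B y) \<le> card V"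

text \<open>The family of support distributions F : 2^C x A -> R (values outside that domain irrelevant).\<close>
definition supp_family :: "'c set \<Rightarrow> ('c set \<Rightarrow> nat) \<Rightarrow> 'c set \<Rightarrow> ('c set \<Rightarrow> 'c \<Rightarrow> real) set" where
  "supp_family C B A = {F. (\<forall>y\<in>Pow C. \<forall>c\<in>A. F y c \<ge> 0)
      \<and> (\<forall>y\<in>Pow C. \<forall>c\<in>A. c \<notin> y \<longrightarrow> F y c = 0)
      \<and> (\<forall>y\<in>Pow C. y \<inter> A \<noteq> {} \<longrightarrow> (\<Sum>c\<in>A \<inter> y. F y c) = real (B y))}"

definition Supp :: "'c set \<Rightarrow> ('c set \<Rightarrow> 'c \<Rightarrow> real) \<Rightarrow> 'c \<Rightarrow> real" where
  "Supp C F c = (\<Sum>y\<in>Pow C. F y c)"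

definition maxMin :: "'c set \<Rightarrow> ('c set \<Rightarrow> nat) \<Rightarrow> 'c set \<Rightarrow> real" where
  "maxMin C B A = (SUP F\<in>supp_family C B A. Min ((\<lambda>c. Supp C F c) ` A))"

definition opt_family :: "'c set \<Rightarrow> ('c set \<Rightarrow> nat) \<Rightarrow> 'c set \<Rightarrow> ('c set \<Rightarrow> 'c \<Rightarrow> real) set" where
  "opt_family C B A = {F \<in> supp_family C B A. \<forall>c\<in>A. Supp C F c \<ge> maxMin C B A}"

end

theory Submission
  imports Defs
begin

lemma ecomb: assumes sm: "s > (m::real)" and e_def: "e = (s - m) / ((s - m) + \<bar>s - g\<bar> + 1)"
  shows "(1 - e) * s + e * g > m"
proof -
  have e0: "0 < e" using sm by (auto simp: e_def)
  have d: "(s - m) + \<bar>s - g\<bar> + 1 > 0" using sm by simp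
  have q: "\<bar>s - g\<bar> / ((s - m) + \<bar>s - g\<bar> + 1) < 1" using d sm by (simp add: divide_less_eq)
  have "e * \<bar>s - g\<bar> = (s - m) * (\<bar>s - g\<bar> / ((s - m) + \<bar>s - g\<bar> + 1))"
    unfolding e_def by simp
  also have "\<dots> < (s - m) * 1" using sm q by (intro mult_strict_left_mono) auto
  finally have "e * \<bar>s - g\<bar> < s - m" by simp
  moreover have "e * (s - g) \<le> e * \<bar>s - g\<bar>" using e0 by (intro mult_left_mono) auto
  ultimately show ?thesis by (simp add: algebra_simps)
qed

lemma fam_iff: "F \<in> supp_family C B A \<longleftrightarrow> (\<forall>y\<in>Pow C. \<forall>c\<in>A. F y c \<ge> 0)
      \<and> (\<forall>y\<in>Pow C. \<forall>c\<in>A. c \<notin> y \<longrightarrow> F y c = 0)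
      \<and> (\<forall>y\<in>Pow C. y \<inter> A \<noteq> {} \<longrightarrow> (\<Sum>c\<in>A \<inter> y. F y c) = real (B y))"
  unfolding supp_family_def by simp

lemma fam_bdd:
  assumes "finite C" "A \<subseteq> C" "A \<noteq> {}"
  shows "bdd_above ((\<lambda>F. Min ((\<lambda>c. Supp C F c) ` A)) ` supp_family C B A)"
proof -
  have fA: "finite A" using assms finite_subset by blast
  { fix F assume F: "F \<in> supp_family C B A"
    obtain c where c: "c \<in> A" using assms by blast
    have "Supp C F c \<le> (\<Sum>y\<in>Pow C. real (B y))"
      unfolding Supp_def
    proof (rule sum_mono)
      fix y assume y: "y \<in> Pow C"
      show "F y c \<le> real (B y)"
      proof (cases "c \<in> y")
        case True
        hence ne: "y \<inter> A \<noteq> {}" using c by blast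
        have "F y c \<le> (\<Sum>c\<in>A \<inter> y. F y c)"
          by (rule member_le_sum) (use F y c True fA in \<open>auto simp: fam_iff\<close>)
        also have "\<dots> = real (B y)" using F y ne by (simp add: fam_iff)
        finally show ?thesis .
      qed (use F y c in \<open>auto simp: fam_iff\<close>)
    qed
    moreover have "Min ((\<lambda>c. Supp C F c) ` A) \<le> Supp C F c"
      using fA c by (intro Min_le) auto
    ultimately have "Min ((\<lambda>c. Supp C F c) ` A) \<le> (\<Sum>y\<in>Pow C. real (B y))" by linarith }
  thus ?thesis by (auto simp: bdd_above_def)
qed

lemma fam_ne:
  assumes "finite C" "A \<subseteq> C"
  shows "supp_family C B A \<noteq> {}"
proof -
  have fA: "finite A" using assms finite_subset by blast
  define F where "F = (\<lambda>y c. if c \<in> y then real (B y) / real (card (A \<inter> y)) else 0)"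
  have "F \<in> supp_family C B A"
    unfolding fam_iff
  proof (intro conjI ballI impI)
    fix y assume y: "y \<in> Pow C" "y \<inter> A \<noteq> {}"
    have "card (A \<inter> y) \<noteq> 0" using fA y by auto
    thus "(\<Sum>c\<in>A \<inter> y. F y c) = real (B y)" by (simp add: F_def)
  qed (auto simp: F_def)
  thus ?thesis by blast
qed

lemma mm_upper:
  assumes "finite C" "A \<subseteq> C" "A \<noteq> {}" "F \<in> supp_family C B A"
  shows "Min ((\<lambda>c. Supp C F c) ` A) \<le> maxMin C B A"
  unfolding maxMin_def by (rule cSUP_upper[OF assms(4) fam_bdd[OF assms(1-3)]])

lemma mm_least:
  assumes "finite C" "A \<subseteq> C"
    "\<And>F. F \<in> supp_family C B A \<Longrightarrow> Min ((\<lambda>c. Supp C F c) ` A) \<le> t"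
  shows "maxMin C B A \<le> t"
  unfolding maxMin_def by (rule cSUP_least[OF fam_ne[OF assms(1,2)] assms(3)])

theorem lemma4:
  fixes V :: "'v set" and C :: "'c set" and S :: nat and B :: "'c set \<Rightarrow> nat"
    and A :: "'c set" and F :: "'c set \<Rightarrow> 'c \<Rightarrow> real" and cstar :: 'c
  assumes "election V C S B"
    and "A \<subseteq> C" and "A \<noteq> {}"
    and "F \<in> opt_family C B A"
    and "cstar \<in> A"
    and "Supp C F cstar > maxMin C B A"
  shows "maxMin C B A = maxMin C B (A - {cstar})"
proof -
  have fC: "finite C" using assms(1) by (simp add: election_def)
  have fA: "finite A" using fC assms(2) finite_subset by blast
  define A' where "A' = A - {cstar}"
  define m where "m = maxMin C B A"
  have Ffam: "F \<in> supp_family C B A" and Fopt: "\<And>c. c \<in> A \<Longrightarrow> Supp C F c \<ge> m"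
    using assms(4) by (auto simp: opt_family_def m_def)
  have A'ne: "A' \<noteq> {}"
  proof
    assume "A' = {}"
    hence "A = {cstar}" using assms(5) by (auto simp: A'_def)
    hence "Min ((\<lambda>c. Supp C F c) ` A) = Supp C F cstar" by simp
    with mm_upper[OF fC assms(2,3) Ffam] assms(6) show False by simp
  qed
  have A'C: "A' \<subseteq> C" using assms(2) by (auto simp: A'_def)
  have fA': "finite A'" using fA by (simp add: A'_def)
  have A_split: "\<And>y. cstar \<in> y \<Longrightarrow> A \<inter> y = insert cstar (A' \<inter> y)"
    using assms(5) by (auto simp: A'_def)
  have A_split2: "\<And>y. cstar \<notin> y \<Longrightarrow> A \<inter> y = A' \<inter> y"
    by (auto simp: A'_def)
  have cA': "cstar \<notin> A'" by (simp add: A'_def)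
  have le1: "m \<le> maxMin C B A'"
    unfolding m_def
  proof (rule mm_least[OF fC assms(2)])
    fix G assume G: "G \<in> supp_family C B A"
    define G' where "G' = (\<lambda>y c. G y c + (if c \<in> y \<and> c \<noteq> cstar then G y cstar / real (card (A' \<inter> y)) else 0))"
    have G'fam: "G' \<in> supp_family C B A'"
      unfolding fam_iff
    proof (intro conjI ballI impI)
      fix y c assume y: "y \<in> Pow C" and c: "c \<in> A'"
      have "G y c \<ge> 0" "G y cstar \<ge> 0" using G y c assms(5) by (auto simp: fam_iff A'_def)
      thus "0 \<le> G' y c" by (simp add: G'_def)
      assume "c \<notin> y"
      thus "G' y c = 0" using G y c by (auto simp: fam_iff A'_def G'_def)
    next
      fix y assume y: "y \<in> Pow C" and ne: "y \<inter> A' \<noteq> {}"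
      have cne: "card (A' \<inter> y) \<noteq> 0" using fA' ne by auto
      have "(\<Sum>c\<in>A' \<inter> y. G' y c) = (\<Sum>c\<in>A' \<inter> y. G y c) + (\<Sum>c\<in>A' \<inter> y. G y cstar / real (card (A' \<inter> y)))"
        unfolding G'_def sum.distrib by (intro arg_cong2[where f="(+)"] sum.cong) (auto simp: A'_def)
      also have "\<dots> = (\<Sum>c\<in>A' \<inter> y. G y c) + G y cstar" using cne by simp
      also have "\<dots> = (\<Sum>c\<in>A \<inter> y. G y c)"
      proof (cases "cstar \<in> y")
        case True
        show ?thesis using True A_split[OF True] cA' fA' by simp
      next
        case False
        have "G y cstar = 0" using G y False assms(5) by (auto simp: fam_iff)
        thus ?thesis using A_split2[OF False] by simp
      qed
      also have "\<dots> = real (B y)" using G y ne by (auto simp: fam_iff A'_def)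
      finally show "(\<Sum>c\<in>A' \<inter> y. G' y c) = real (B y)" .
    qed
    have "Min ((\<lambda>c. Supp C G c) ` A) \<le> Min ((\<lambda>c. Supp C G' c) ` A')"
    proof -
     have "\<forall>c\<in>A'. Min ((\<lambda>c. Supp C G c) ` A) \<le> Supp C G' c"
     proof
      fix c assume c: "c \<in> A'"
      have "Supp C G c \<le> Supp C G' c" unfolding Supp_def
      proof (rule sum_mono)
        fix y assume y: "y \<in> Pow C"
        have "G y cstar \<ge> 0" using G y assms(5) by (auto simp: fam_iff)
        thus "G y c \<le> G' y c" by (simp add: G'_def)
      qed
      moreover have "Min ((\<lambda>c. Supp C G c) ` A) \<le> Supp C G c"
        using fA c by (intro Min_le) (auto simp: A'_def)
      ultimately show "Min ((\<lambda>c. Supp C G c) ` A) \<le> Supp C G' c" by linarith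
     qed
     thus ?thesis using fA' A'ne by (simp add: Min_ge_iff)
    qed
    also have "\<dots> \<le> maxMin C B A'" by (rule mm_upper[OF fC A'C A'ne G'fam])
    finally show "Min ((\<lambda>c. Supp C G c) ` A) \<le> maxMin C B A'" .
  qed
  have le2: "maxMin C B A' \<le> m"
  proof (rule mm_least[OF fC A'C])
    fix G assume G: "G \<in> supp_family C B A'"
    show "Min ((\<lambda>c. Supp C G c) ` A') \<le> m"
    proof (rule ccontr)
      assume "\<not> ?thesis"
      hence Gbig: "\<And>c. c \<in> A' \<Longrightarrow> Supp C G c > m"
        using fA' A'ne by (auto simp: Min_gr_iff not_le)
      define G2 where "G2 = (\<lambda>y c. if c = cstar then (if cstar \<in> y \<and> y \<inter> A' = {} then real (B y) else 0) else G y c)"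
      have G2fam: "G2 \<in> supp_family C B A"
        unfolding fam_iff
      proof (intro conjI ballI impI)
        fix y c assume y: "y \<in> Pow C" and c: "c \<in> A"
        show "0 \<le> G2 y c" using G y c by (auto simp: G2_def fam_iff A'_def)
        assume "c \<notin> y"
        thus "G2 y c = 0" using G y c by (auto simp: G2_def fam_iff A'_def)
      next
        fix y assume y: "y \<in> Pow C" and ne: "y \<inter> A \<noteq> {}"
        have eq: "\<And>c. c \<in> A' \<inter> y \<Longrightarrow> G2 y c = G y c" using cA' by (auto simp: G2_def)
        show "(\<Sum>c\<in>A \<inter> y. G2 y c) = real (B y)"
        proof (cases "y \<inter> A' = {}")
          case True
          hence "A \<inter> y = {cstar}" using ne by (auto simp: A'_def)
          moreover have "cstar \<in> y" using \<open>A \<inter> y = {cstar}\<close> by blast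
          ultimately show ?thesis using True by (simp add: G2_def)
        next
          case False
          have s: "(\<Sum>c\<in>A' \<inter> y. G2 y c) = real (B y)"
          proof -
            have "(\<Sum>c\<in>A' \<inter> y. G2 y c) = (\<Sum>c\<in>A' \<inter> y. G y c)" using eq by (rule sum.cong[OF refl])
            also have "\<dots> = real (B y)"
            proof -
              have H: "\<forall>y\<in>Pow C. y \<inter> A' \<noteq> {} \<longrightarrow> (\<Sum>c\<in>A' \<inter> y. G y c) = real (B y)"
                using G unfolding fam_iff by blast
              show ?thesis using H y False by blast
            qed
            finally show ?thesis .
          qed
          show ?thesis
          proof (cases "cstar \<in> y")
            case True
            show ?thesis using A_split[OF True] cA' fA' s False by (simp add: G2_def)
          next
            case False
            show ?thesis using A_split2[OF False] s by simp
          qed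
        qed
      qed
      define s where "s = Supp C F cstar"
      define g where "g = Supp C G2 cstar"
      have sm: "s > m" using assms(6) by (simp add: s_def m_def)
      define e where "e = (s - m) / ((s - m) + \<bar>s - g\<bar> + 1)"
      have e0: "0 < e" and e1: "e < 1" using sm by (auto simp: e_def field_simps)
      have ecs: "(1 - e) * s + e * g > m" by (rule ecomb[OF sm e_def])
      define H where "H = (\<lambda>y c. (1 - e) * F y c + e * G2 y c)"
      have Hfam: "H \<in> supp_family C B A"
        unfolding fam_iff
      proof (intro conjI ballI impI)
        fix y c assume y: "y \<in> Pow C" and c: "c \<in> A"
        have "F y c \<ge> 0" "G2 y c \<ge> 0" using Ffam G2fam y c by (auto simp: fam_iff)
        thus "0 \<le> H y c" using e0 e1 by (simp add: H_def)
        assume "c \<notin> y"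
        thus "H y c = 0" using Ffam G2fam y c by (auto simp: fam_iff H_def)
      next
        fix y assume y: "y \<in> Pow C" and ne: "y \<inter> A \<noteq> {}"
        have "(\<Sum>c\<in>A \<inter> y. H y c) = (1 - e) * (\<Sum>c\<in>A \<inter> y. F y c) + e * (\<Sum>c\<in>A \<inter> y. G2 y c)"
          by (simp add: H_def sum.distrib sum_distrib_left)
        also have "\<dots> = real (B y)" using Ffam G2fam y ne by (simp add: fam_iff algebra_simps)
        finally show "(\<Sum>c\<in>A \<inter> y. H y c) = real (B y)" .
      qed
      have SH: "\<And>c. Supp C H c = (1 - e) * Supp C F c + e * Supp C G2 c"
        by (simp add: Supp_def H_def sum.distrib sum_distrib_left)
      have "\<forall>c\<in>A. Supp C H c > m"
      proof
        fix c assume c: "c \<in> A"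
        show "Supp C H c > m"
        proof (cases "c = cstar")
          case True
          thus ?thesis using ecs SH by (simp add: s_def g_def)
        next
          case False
          hence cA'': "c \<in> A'" using c by (simp add: A'_def)
          have "Supp C G2 c = Supp C G c" unfolding Supp_def using False by (simp add: G2_def)
          hence g2: "Supp C G2 c > m" using Gbig[OF cA''] by simp
          have f2: "Supp C F c \<ge> m" using Fopt c by simp
          have "(1 - e) * Supp C F c \<ge> (1 - e) * m" using f2 e1 by (intro mult_left_mono) auto
          moreover have "e * Supp C G2 c > e * m" using g2 e0 by simp
          ultimately show ?thesis using SH[of c] by (simp add: algebra_simps)
        qed
      qed
      hence "Min ((\<lambda>c. Supp C H c) ` A) > m" using fA assms(3) by (simp add: Min_gr_iff)
      moreover have "Min ((\<lambda>c. Supp C H c) ` A) \<le> m"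
        unfolding m_def by (rule mm_upper[OF fC assms(2,3) Hfam])
      ultimately show False by simp
    qed
  qed
  show ?thesis using le1 le2 by (simp add: m_def A'_def)
qed

end
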